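(* Let $x_1,\dots,x_N\in[0,1]$ with $\mu^\star:=\frac1N\sum_{i=1}^N x_i$, and let $X_1,\dots,X_N$ be a sequential random sample without replacement from $\{x_1,\dots,x_N\}$ (at each step a ballot is drawn uniformly at random from those remaining). For $\mu\in[0,1]$ and $i\in\{1,\dots,N\}$ let \[ \mathcal C_i(\mu) := \frac{N\mu - \sum_{j=1}^{i-1}X_j}{N-i+1}. \] Let $D\ge 2$ be an integer and let $(\theta_1^+,\dots,\theta_D^+)$ and $(\theta_1^-,\dots,\theta_D^-)$ be nonnegative vectors each summing to one. Define \[ M_t^{D+}(\mu) := \sum_{d=1}^D\theta_d^+\prod_{i=1}^t\Big(1+\frac{d}{(D+1)\mathcal C_i(\mu)}(X_i-\mathcal C_i(\mu))\Big), \] \[ M_t^{D-}(\mu) := \sum_{d=1}^D\theta_d^-\prod_{i=1}^t\Big(1-\frac{d}{(D+1)(1-\mathcal C_i(\mu))}(X_i-\mathcal C_i(\mu))\Big), \] and, for $\beta\in[0,1]$, $M_t^{D\pm}(\mu) := \beta M_t^{D+}(\mu)+(1-\beta)M_t^{D-}(\mu)$, with $M_0^{D\pm}(\mu):=1$. Then $(M_t^{D\pm}(\mu^\star))_{t=0}^N$ is a nonnegative martingale starting at one (with respect to the filtration generated by $X_1,\dots,X_t$). Consequently, for $\alpha\in(0,1)$, the sets \[ C_t^{\pm} := \{\mu\in[0,1] : M_t^{D\pm}(\mu)<1/\alpha\},\quad t=1,\dots,N, \] form a $(1-\alpha)$ confidence sequence for $\mu^\star$, i.e. $\mathbb P(\exists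 t\in\{1,\dots,N\} : \mu^\star\notin C_t^\pm)\le\alpha$.
   Context: $\mathcal C_i(\mu)$ is the conditional mean of $X_i$ given $X_1,\dots,X_{i-1}$ if the population mean were $\mu$. *)

theory Defs
  imports "HOL-Probability.Probability" "HOL-Combinatorics.Permutations"
begin

text \<open>Sampling without replacement: a uniformly random permutation \<sigma> of {1..N};
  the i-th draw is X_i = x (\<sigma> i).  The observed sequence is given as X :: nat \<Rightarrow> real.\<close>

definition sample_space :: "nat \<Rightarrow> (nat \<Rightarrow> nat) set" where
  "sample_space N = {\<sigma>. \<sigma> permutes {1..N}}"

definition Ccond :: "nat \<Rightarrow> (nat \<Rightarrow> real) \<Rightarrow> real \<Rightarrow> nat \<Rightarrow> real" where
  "Ccond N X \<mu> i = (real N * \<mu> - (\<Sum>j=1..<i. X j)) / (real N - real i + 1)"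

definition Mplus :: "nat \<Rightarrow> nat \<Rightarrow> (nat \<Rightarrow> real) \<Rightarrow> (nat \<Rightarrow> real) \<Rightarrow> real \<Rightarrow> nat \<Rightarrow> real" where
  "Mplus N D \<theta> X \<mu> t = (\<Sum>d=1..D. \<theta> d * (\<Prod>i=1..t.
      1 + real d / ((real D + 1) * Ccond N X \<mu> i) * (X i - Ccond N X \<mu> i)))"

definition Mminus :: "nat \<Rightarrow> nat \<Rightarrow> (nat \<Rightarrow> real) \<Rightarrow> (nat \<Rightarrow> real) \<Rightarrow> real \<Rightarrow> nat \<Rightarrow> real" where
  "Mminus N D \<theta> X \<mu> t = (\<Sum>d=1..D. \<theta> d * (\<Prod>i=1..t.
      1 - real d / ((real D + 1) * (1 - Ccond N X \<mu> i)) * (X i - Ccond N X \<mu> i)))"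

definition Mpm :: "nat \<Rightarrow> nat \<Rightarrow> real \<Rightarrow> (nat \<Rightarrow> real) \<Rightarrow> (nat \<Rightarrow> real) \<Rightarrow> (nat \<Rightarrow> real) \<Rightarrow> real \<Rightarrow> nat \<Rightarrow> real" where
  "Mpm N D \<beta> \<theta>p \<theta>m X \<mu> t =
     (if t = 0 then 1 else \<beta> * Mplus N D \<theta>p X \<mu> t + (1 - \<beta>) * Mminus N D \<theta>m X \<mu> t)"

text \<open>Martingale w.r.t. the natural filtration of X_1..X_t on a finite sample space with the
  uniform distribution: conditional expectation of M_{t+1} given X_1..X_t is the average over the
  atom of outcomes sharing the same first t observations.\<close>
definition uniform_martingale ::
  "'w set \<Rightarrow> nat \<Rightarrow> (nat \<Rightarrow> 'w \<Rightarrow> real) \<Rightarrow> (nat \<Rightarrow> 'w \<Rightarrow> real) \<Rightarrow> bool" where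
  "uniform_martingale \<Omega> N X M \<longleftrightarrow>
     (\<forall>t<N. \<forall>\<omega>\<in>\<Omega>.
        (\<Sum>\<omega>'\<in>{\<omega>'\<in>\<Omega>. \<forall>i\<in>{1..t}. X i \<omega>' = X i \<omega>}. M (Suc t) \<omega>')
          / real (card {\<omega>'\<in>\<Omega>. \<forall>i\<in>{1..t}. X i \<omega>' = X i \<omega>}) = M t \<omega>)"

end

theory Submission
  imports Defs
begin

lemma tower:
  fixes \<Omega> :: "'w set" and k :: "'w \<Rightarrow> 'k" and g :: "'w \<Rightarrow> real"
  assumes fin: "finite \<Omega>"
  shows "(\<Sum>\<sigma>\<in>\<Omega>. (\<Sum>\<sigma>'\<in>{\<sigma>'\<in>\<Omega>. k \<sigma>' = k \<sigma>}. g \<sigma>') / real (card {\<sigma>'\<in>\<Omega>. k \<sigma>' = k \<sigma>}))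
         = (\<Sum>\<sigma>\<in>\<Omega>. g \<sigma>)"
proof -
  define B where "B \<sigma> = {\<sigma>'\<in>\<Omega>. k \<sigma>' = k \<sigma>}" for \<sigma>
  have cardpos: "real (card (B \<sigma>)) > 0" if "\<sigma> \<in> \<Omega>" for \<sigma>
  proof -
    have "\<sigma> \<in> B \<sigma>" using that by (simp add: B_def)
    moreover have "finite (B \<sigma>)" using fin by (simp add: B_def)
    ultimately show ?thesis by (simp add: card_gt_0_iff) blast
  qed
  have "(\<Sum>\<sigma>\<in>\<Omega>. (\<Sum>\<sigma>'\<in>B \<sigma>. g \<sigma>') / real (card (B \<sigma>)))
      = (\<Sum>\<sigma>\<in>\<Omega>. \<Sum>\<sigma>'\<in>\<Omega>. (if k \<sigma>' = k \<sigma> then g \<sigma>' / real (card (B \<sigma>')) else 0))"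
  proof (rule sum.cong[OF refl])
    fix \<sigma> assume "\<sigma> \<in> \<Omega>"
    have "(\<Sum>\<sigma>'\<in>B \<sigma>. g \<sigma>') / real (card (B \<sigma>)) = (\<Sum>\<sigma>'\<in>B \<sigma>. g \<sigma>' / real (card (B \<sigma>')))"
      unfolding sum_divide_distrib by (rule sum.cong[OF refl]) (simp add: B_def)
    also have "\<dots> = (\<Sum>\<sigma>'\<in>\<Omega>. (if k \<sigma>' = k \<sigma> then g \<sigma>' / real (card (B \<sigma>')) else 0))"
      unfolding B_def using fin by (simp add: sum.If_cases Int_def)
    finally show "(\<Sum>\<sigma>'\<in>B \<sigma>. g \<sigma>') / real (card (B \<sigma>)) = (\<Sum>\<sigma>'\<in>\<Omega>. (if k \<sigma>' = k \<sigma> then g \<sigma>' / real (card (B \<sigma>')) else 0))" .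
  qed
  also have "\<dots> = (\<Sum>\<sigma>'\<in>\<Omega>. \<Sum>\<sigma>\<in>\<Omega>. (if k \<sigma>' = k \<sigma> then g \<sigma>' / real (card (B \<sigma>')) else 0))"
    by (rule sum.swap)
  also have "\<dots> = (\<Sum>\<sigma>'\<in>\<Omega>. g \<sigma>')"
  proof (rule sum.cong[OF refl])
    fix \<sigma>' assume s: "\<sigma>' \<in> \<Omega>"
    have "(\<Sum>\<sigma>\<in>\<Omega>. (if k \<sigma>' = k \<sigma> then g \<sigma>' / real (card (B \<sigma>')) else 0))
        = real (card (B \<sigma>')) * (g \<sigma>' / real (card (B \<sigma>')))"
    proof -
      have e: "\<Omega> \<inter> {\<sigma>. k \<sigma>' = k \<sigma>} = B \<sigma>'" by (auto simp: B_def)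
      show ?thesis using fin by (simp add: sum.If_cases e)
    qed
    also have "\<dots> = g \<sigma>'" using cardpos[OF s] by simp
    finally show "(\<Sum>\<sigma>\<in>\<Omega>. (if k \<sigma>' = k \<sigma> then g \<sigma>' / real (card (B \<sigma>')) else 0)) = g \<sigma>'" .
  qed
  finally show ?thesis by (simp add: B_def)
qed

fun stopped :: "real \<Rightarrow> (nat \<Rightarrow> 'w \<Rightarrow> real) \<Rightarrow> nat \<Rightarrow> 'w \<Rightarrow> real" where
  "stopped c M 0 w = M 0 w"
| "stopped c M (Suc t) w = (if stopped c M t w \<ge> c then stopped c M t w else M (Suc t) w)"

lemma stopped_lt: "stopped c M t w < c \<Longrightarrow> stopped c M t w = M t w"
  by (cases t) (auto split: if_splits)

lemma stopped_ge: "M t w \<ge> c \<Longrightarrow> stopped c M t w \<ge> c"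
  by (cases t) auto

lemma stopped_mono: "stopped c M t w \<ge> c \<Longrightarrow> stopped c M (t + k) w \<ge> c"
  by (induction k) auto

lemma stopped_nn: "(\<forall>s\<le>t. M s w \<ge> 0) \<Longrightarrow> stopped c M t w \<ge> 0"
  by (induction t) auto

lemma atom_eq:
  "{\<sigma>'\<in>\<Omega>. \<forall>i\<in>{1..t}. X i \<sigma>' = X i \<sigma>} = {\<sigma>'\<in>\<Omega>. restrict (\<lambda>i. X i \<sigma>') {1..t} = restrict (\<lambda>i. X i \<sigma>) {1..t}}"
  by (auto simp: restrict_def fun_eq_iff)

lemma ville:
  fixes \<Omega> :: "'w set" and X :: "nat \<Rightarrow> 'w \<Rightarrow> real" and M :: "nat \<Rightarrow> 'w \<Rightarrow> real"
  assumes fin: "finite \<Omega>" and mart: "uniform_martingale \<Omega> N X M"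
    and nn: "\<forall>\<sigma>\<in>\<Omega>. \<forall>t\<le>N. 0 \<le> M t \<sigma>" and M0: "\<forall>\<sigma>\<in>\<Omega>. M 0 \<sigma> = 1" and c: "c > 0"
  shows "c * real (card {\<sigma>\<in>\<Omega>. \<exists>t\<in>{1..N}. M t \<sigma> \<ge> c}) \<le> real (card \<Omega>)"
proof -
  define atm where "atm t \<sigma> = {\<sigma>'\<in>\<Omega>. \<forall>i\<in>{1..t}. X i \<sigma>' = X i \<sigma>}" for t \<sigma>
  define S where "S = stopped c M"
  have atsym: "atm t \<sigma>' = atm t \<sigma>" if "\<sigma>' \<in> atm t \<sigma>" for t \<sigma> \<sigma>'
    using that unfolding atm_def by auto
  have atsub: "atm (Suc t) \<sigma> \<subseteq> atm t \<sigma>" for t \<sigma> unfolding atm_def by auto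
  have mt: "(\<Sum>\<sigma>'\<in>atm t \<sigma>. M (Suc t) \<sigma>') / real (card (atm t \<sigma>)) = M t \<sigma>"
    if "t < N" "\<sigma> \<in> \<Omega>" for t \<sigma>
    using mart that unfolding uniform_martingale_def atm_def by blast
  have cardpos: "real (card (atm t \<sigma>)) > 0" if "\<sigma> \<in> \<Omega>" for t \<sigma>
  proof -
    have "\<sigma> \<in> atm t \<sigma>" using that by (simp add: atm_def)
    moreover have "finite (atm t \<sigma>)" using fin by (simp add: atm_def)
    ultimately show ?thesis by (simp add: card_gt_0_iff) blast
  qed
  have atO: "atm t \<sigma> \<subseteq> \<Omega>" for t \<sigma> by (auto simp: atm_def)
  have Mconst: "M t \<sigma>' = M t \<sigma>" if "t < N" "\<sigma> \<in> \<Omega>" "\<sigma>' \<in> atm t \<sigma>" for t \<sigma> \<sigma>'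
  proof -
    have "\<sigma>' \<in> \<Omega>" using that atO by blast
    from mt[OF that(1) this] mt[OF that(1,2)] atsym[OF that(3)] show ?thesis by simp
  qed
  have Sconst: "\<forall>\<sigma>\<in>\<Omega>. \<forall>\<sigma>'\<in>atm t \<sigma>. S t \<sigma>' = S t \<sigma>" if "t < N" for t
    using that
  proof (induction t)
    case 0 then show ?case using Mconst by (simp add: S_def)
  next
    case (Suc t)
    show ?case
    proof (intro ballI)
      fix \<sigma> \<sigma>' assume a: "\<sigma> \<in> \<Omega>" "\<sigma>' \<in> atm (Suc t) \<sigma>"
      have tN: "t < N" using Suc.prems by simp
      have "S t \<sigma>' = S t \<sigma>" using Suc.IH[OF tN] a atsub[of t \<sigma>] by blast
      moreover have "M (Suc t) \<sigma>' = M (Suc t) \<sigma>" using Mconst Suc a by blast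
      ultimately show "S (Suc t) \<sigma>' = S (Suc t) \<sigma>" by (simp add: S_def)
    qed
  qed
  have Smart: "(\<Sum>\<sigma>'\<in>atm t \<sigma>. S (Suc t) \<sigma>') / real (card (atm t \<sigma>)) = S t \<sigma>"
    if "t < N" "\<sigma> \<in> \<Omega>" for t \<sigma>
  proof (cases "S t \<sigma> \<ge> c")
    case True
    have "(\<Sum>\<sigma>'\<in>atm t \<sigma>. S (Suc t) \<sigma>') = (\<Sum>\<sigma>'\<in>atm t \<sigma>. S t \<sigma>)"
      using Sconst[OF that(1)] that(2) True by (intro sum.cong) (auto simp: S_def)
    then show ?thesis using cardpos[OF that(2), of t] by simp
  next
    case False
    have "(\<Sum>\<sigma>'\<in>atm t \<sigma>. S (Suc t) \<sigma>') = (\<Sum>\<sigma>'\<in>atm t \<sigma>. M (Suc t) \<sigma>')"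
      using Sconst[OF that(1)] that(2) False by (intro sum.cong) (auto simp: S_def)
    moreover have "S t \<sigma> = M t \<sigma>" using False stopped_lt[of c M t \<sigma>] by (simp add: S_def)
    ultimately show ?thesis using mt[OF that] by simp
  qed
  have Ssum: "(\<Sum>\<sigma>\<in>\<Omega>. S t \<sigma>) = real (card \<Omega>)" if "t \<le> N" for t
    using that
  proof (induction t)
    case 0 then show ?case using M0 by (simp add: S_def)
  next
    case (Suc t)
    have "(\<Sum>\<sigma>\<in>\<Omega>. S (Suc t) \<sigma>) = (\<Sum>\<sigma>\<in>\<Omega>. (\<Sum>\<sigma>'\<in>atm t \<sigma>. S (Suc t) \<sigma>') / real (card (atm t \<sigma>)))"
      unfolding atm_def atom_eq by (rule tower[OF fin, symmetric])
    also have "\<dots> = (\<Sum>\<sigma>\<in>\<Omega>. S t \<sigma>)" using Smart Suc.prems by (intro sum.cong) auto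
    finally show ?case using Suc by simp
  qed
  define E where "E = {\<sigma>\<in>\<Omega>. S N \<sigma> \<ge> c}"
  have sub: "{\<sigma>\<in>\<Omega>. \<exists>t\<in>{1..N}. M t \<sigma> \<ge> c} \<subseteq> E"
  proof
    fix \<sigma> assume "\<sigma> \<in> {\<sigma>\<in>\<Omega>. \<exists>t\<in>{1..N}. M t \<sigma> \<ge> c}"
    then obtain t where t: "\<sigma> \<in> \<Omega>" "t \<le> N" "M t \<sigma> \<ge> c" by auto
    have "S t \<sigma> \<ge> c" using stopped_ge t(3) by (simp add: S_def)
    then have "S (t + (N - t)) \<sigma> \<ge> c" unfolding S_def by (rule stopped_mono)
    then show "\<sigma> \<in> E" using t by (simp add: E_def)
  qed
  have finE: "finite E" using fin by (simp add: E_def)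
  have "c * real (card {\<sigma>\<in>\<Omega>. \<exists>t\<in>{1..N}. M t \<sigma> \<ge> c}) \<le> c * real (card E)"
    using card_mono[OF finE sub] c by simp
  also have "\<dots> = (\<Sum>\<sigma>\<in>E. c)" by simp
  also have "\<dots> \<le> (\<Sum>\<sigma>\<in>E. S N \<sigma>)" by (rule sum_mono) (simp add: E_def)
  also have "\<dots> \<le> (\<Sum>\<sigma>\<in>\<Omega>. S N \<sigma>)"
    using fin nn by (intro sum_mono2) (auto simp: E_def S_def intro!: stopped_nn)
  also have "\<dots> = real (card \<Omega>)" using Ssum by simp
  finally show ?thesis .
qed


lemma sumperm:
  assumes "\<sigma> permutes {1..N}"
  shows "(\<Sum>i=1..N. x (\<sigma> i)) = (\<Sum>i=1..N. (x i :: real))"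
  using sum.reindex_bij_betw[OF permutes_imp_bij[OF assms], of x] .

lemma split_sum:
  assumes "1 \<le> i" "i \<le> Suc N"
  shows "(\<Sum>j=1..N. f j) = (\<Sum>j=1..<i. f j) + (\<Sum>j=i..N. (f j :: real))"
proof -
  have "(\<Sum>j=1..N. f j) = (\<Sum>j=1..<Suc N. f j)" by (simp add: atLeastLessThanSuc_atLeastAtMost)
  also have "\<dots> = (\<Sum>j=1..<i. f j) + (\<Sum>j=i..<Suc N. f j)"
    by (rule sum.atLeastLessThan_concat[symmetric]) (use assms in auto)
  finally show ?thesis by (simp add: atLeastLessThanSuc_atLeastAtMost)
qed

lemma symm:
  fixes x :: "nat \<Rightarrow> real"
  assumes tN: "t < N" and \<sigma>: "\<sigma> \<in> sample_space N"
  defines "A \<equiv> {\<sigma>'\<in>sample_space N. \<forall>i\<in>{1..t}. x (\<sigma>' i) = x (\<sigma> i)}"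
  shows "real (N - t) * (\<Sum>\<sigma>'\<in>A. x (\<sigma>' (Suc t)))
         = real (card A) * ((\<Sum>i=1..N. x i) - (\<Sum>j=1..t. x (\<sigma> j)))"
proof -
  have finA: "finite A" unfolding A_def sample_space_def
    by (rule finite_subset[OF _ finite_permutations[of "{1..N}"]]) auto
  have step1: "(\<Sum>\<sigma>'\<in>A. x (\<sigma>' (Suc t))) = (\<Sum>\<sigma>'\<in>A. x (\<sigma>' k))" if k: "k \<in> {Suc t..N}" for k
  proof -
    define h where "h \<sigma>' = \<sigma>' \<circ> Transposition.transpose (Suc t) k" for \<sigma>' :: "nat \<Rightarrow> nat"
    have hA: "h \<sigma>' \<in> A" if "\<sigma>' \<in> A" for \<sigma>'
    proof -
      have "Transposition.transpose (Suc t) k permutes {1..N}" using k tN by (intro permutes_swap_id) auto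
      then have "h \<sigma>' permutes {1..N}" using that unfolding h_def A_def sample_space_def
        by (auto intro: permutes_compose)
      moreover have "\<forall>i\<in>{1..t}. x (h \<sigma>' i) = x (\<sigma> i)"
        using that k unfolding h_def A_def by (auto simp: transpose_apply_other)
      ultimately show ?thesis using that by (simp add: A_def sample_space_def)
    qed
    have hh: "h (h \<sigma>') = \<sigma>'" for \<sigma>' by (simp add: h_def comp_assoc)
    have bij: "bij_betw h A A"
      by (rule bij_betwI[where g = h]) (auto simp: hA hh)
    have "(\<Sum>\<sigma>'\<in>A. x (\<sigma>' k)) = (\<Sum>\<sigma>'\<in>A. x (h \<sigma>' k))"
      using sum.reindex_bij_betw[OF bij, of "\<lambda>\<sigma>'. x (\<sigma>' k)"] by simp
    also have "\<dots> = (\<Sum>\<sigma>'\<in>A. x (\<sigma>' (Suc t)))" by (simp add: h_def)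
    finally show ?thesis by simp
  qed
  have "real (N - t) * (\<Sum>\<sigma>'\<in>A. x (\<sigma>' (Suc t))) = (\<Sum>k=Suc t..N. (\<Sum>\<sigma>'\<in>A. x (\<sigma>' (Suc t))))"
    by simp
  also have "\<dots> = (\<Sum>k=Suc t..N. (\<Sum>\<sigma>'\<in>A. x (\<sigma>' k)))"
    by (rule sum.cong[OF refl]) (rule step1)
  also have "\<dots> = (\<Sum>\<sigma>'\<in>A. (\<Sum>k=Suc t..N. x (\<sigma>' k)))" by (rule sum.swap)
  also have "\<dots> = (\<Sum>\<sigma>'\<in>A. ((\<Sum>i=1..N. x i) - (\<Sum>j=1..t. x (\<sigma> j))))"
  proof (rule sum.cong[OF refl])
    fix \<sigma>' assume s: "\<sigma>' \<in> A"
    have "(\<Sum>i=1..N. x i) = (\<Sum>i=1..N. x (\<sigma>' i))"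
      using s sumperm[of \<sigma>' N x] by (simp add: A_def sample_space_def)
    also have "\<dots> = (\<Sum>j=1..<Suc t. x (\<sigma>' j)) + (\<Sum>k=Suc t..N. x (\<sigma>' k))"
      using tN by (intro split_sum) auto
    also have "(\<Sum>j=1..<Suc t. x (\<sigma>' j)) = (\<Sum>j=1..t. x (\<sigma> j))"
      using s by (simp add: atLeastLessThanSuc_atLeastAtMost A_def)
    finally show "(\<Sum>k=Suc t..N. x (\<sigma>' k)) = (\<Sum>i=1..N. x i) - (\<Sum>j=1..t. x (\<sigma> j))" by simp
  qed
  also have "\<dots> = real (card A) * ((\<Sum>i=1..N. x i) - (\<Sum>j=1..t. x (\<sigma> j)))" by simp
  finally show ?thesis .
qed


definition Kp :: "nat \<Rightarrow> nat \<Rightarrow> (nat \<Rightarrow> real) \<Rightarrow> (nat \<Rightarrow> real) \<Rightarrow> real \<Rightarrow> nat \<Rightarrow> real" where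
  "Kp N D \<theta> Y \<mu> t = (\<Sum>d=1..D. \<theta> d * (\<Prod>i=1..t.
      1 + real d / ((real D + 1) * Ccond N Y \<mu> i) * (Y i - Ccond N Y \<mu> i))
      * (real d / ((real D + 1) * Ccond N Y \<mu> (Suc t))))"

definition Km :: "nat \<Rightarrow> nat \<Rightarrow> (nat \<Rightarrow> real) \<Rightarrow> (nat \<Rightarrow> real) \<Rightarrow> real \<Rightarrow> nat \<Rightarrow> real" where
  "Km N D \<theta> Y \<mu> t = (\<Sum>d=1..D. \<theta> d * (\<Prod>i=1..t.
      1 - real d / ((real D + 1) * (1 - Ccond N Y \<mu> i)) * (Y i - Ccond N Y \<mu> i))
      * (real d / ((real D + 1) * (1 - Ccond N Y \<mu> (Suc t)))))"

lemma Mplus_Suc: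
  "Mplus N D \<theta> Y \<mu> (Suc t) = Mplus N D \<theta> Y \<mu> t + (Y (Suc t) - Ccond N Y \<mu> (Suc t)) * Kp N D \<theta> Y \<mu> t"
  unfolding Mplus_def Kp_def sum_distrib_left sum.distrib[symmetric]
  by (rule sum.cong[OF refl]) (simp add: prod.nat_ivl_Suc' algebra_simps)

lemma Mminus_Suc:
  "Mminus N D \<theta> Y \<mu> (Suc t) = Mminus N D \<theta> Y \<mu> t - (Y (Suc t) - Ccond N Y \<mu> (Suc t)) * Km N D \<theta> Y \<mu> t"
  unfolding Mminus_def Km_def sum_distrib_left sum_subtractf[symmetric]
  by (rule sum.cong[OF refl]) (simp add: prod.nat_ivl_Suc' algebra_simps)

lemma Ccond_local:
  assumes "\<forall>j\<in>{1..t}. Y' j = Y j" "i \<le> Suc t"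
  shows "Ccond N Y' \<mu> i = Ccond N Y \<mu> i"
proof -
  have "(\<Sum>j=1..<i. Y' j) = (\<Sum>j=1..<i. Y j)" using assms by (intro sum.cong) auto
  then show ?thesis by (simp add: Ccond_def)
qed

lemma Mlocal:
  assumes "\<forall>j\<in>{1..t}. Y' j = Y j"
  shows "Mplus N D \<theta> Y' \<mu> t = Mplus N D \<theta> Y \<mu> t" "Mminus N D \<theta> Y' \<mu> t = Mminus N D \<theta> Y \<mu> t"
    "Kp N D \<theta> Y' \<mu> t = Kp N D \<theta> Y \<mu> t" "Km N D \<theta> Y' \<mu> t = Km N D \<theta> Y \<mu> t"
    "Ccond N Y' \<mu> (Suc t) = Ccond N Y \<mu> (Suc t)"
proof -
  have C: "Ccond N Y' \<mu> i = Ccond N Y \<mu> i" if "i \<le> Suc t" for i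
    using Ccond_local[OF assms that] .
  have P: "\<And>f. (\<Prod>i=1..t. f (Y' i) (Ccond N Y' \<mu> i)) = (\<Prod>i=1..t. f (Y i) (Ccond N Y \<mu> i))"
    using assms C by (intro prod.cong) auto
  show "Mplus N D \<theta> Y' \<mu> t = Mplus N D \<theta> Y \<mu> t" unfolding Mplus_def
    using P[of "\<lambda>y c. 1 + real _ / ((real D + 1) * c) * (y - c)"] by simp
  show "Mminus N D \<theta> Y' \<mu> t = Mminus N D \<theta> Y \<mu> t" unfolding Mminus_def
    using P[of "\<lambda>y c. 1 - real _ / ((real D + 1) * (1 - c)) * (y - c)"] by simp
  show "Kp N D \<theta> Y' \<mu> t = Kp N D \<theta> Y \<mu> t" unfolding Kp_def
    using P[of "\<lambda>y c. 1 + real _ / ((real D + 1) * c) * (y - c)"] C[of "Suc t"] by simp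
  show "Km N D \<theta> Y' \<mu> t = Km N D \<theta> Y \<mu> t" unfolding Km_def
    using P[of "\<lambda>y c. 1 - real _ / ((real D + 1) * (1 - c)) * (y - c)"] C[of "Suc t"] by simp
  show "Ccond N Y' \<mu> (Suc t) = Ccond N Y \<mu> (Suc t)" using C by simp
qed

lemma Mpm_alt:
  assumes "(\<Sum>d=1..D. \<theta>p d) = 1" "(\<Sum>d=1..D. \<theta>m d) = 1"
  shows "Mpm N D \<beta> \<theta>p \<theta>m Y \<mu> t = \<beta> * Mplus N D \<theta>p Y \<mu> t + (1 - \<beta>) * Mminus N D \<theta>m Y \<mu> t"
  using assms by (simp add: Mpm_def Mplus_def Mminus_def)

lemma fp_nn:
  fixes C y :: real and d D :: nat
  assumes "0 \<le> C" "C \<le> 1" "0 \<le> y" "y \<le> 1" "d \<le> D"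
  shows "0 \<le> 1 + real d / ((real D + 1) * C) * (y - C)"
proof (cases "C = 0")
  case True then show ?thesis by simp
next
  case False
  then have Cp: "C > 0" using assms by simp
  have a: "real d / ((real D + 1) * C) \<ge> 0" using Cp by simp
  have "real d / ((real D + 1) * C) * (y - C) \<ge> real d / ((real D + 1) * C) * (- C)"
    using a assms by (intro mult_left_mono) auto
  also have "real d / ((real D + 1) * C) * (- C) = - (real d / (real D + 1))"
  proof -
    have h: "real D + 1 > 0" by simp
    show ?thesis using Cp h by (simp add: divide_simps)
  qed
  finally have "real d / ((real D + 1) * C) * (y - C) \<ge> - (real d / (real D + 1))" .
  moreover have "real d / (real D + 1) \<le> 1" using assms by (simp add: field_simps)
  ultimately show ?thesis by linarith
qed

lemma fm_nn:
  fixes C y :: real and d D :: nat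
  assumes "0 \<le> C" "C \<le> 1" "0 \<le> y" "y \<le> 1" "d \<le> D"
  shows "0 \<le> 1 - real d / ((real D + 1) * (1 - C)) * (y - C)"
proof -
  have "0 \<le> 1 + real d / ((real D + 1) * (1 - C)) * ((1 - y) - (1 - C))"
    using assms by (intro fp_nn) auto
  moreover
  define a where "a = real d / ((real D + 1) * (1 - C))"
  have "1 - a * (y - C) = 1 + a * ((1 - y) - (1 - C))" by (simp add: algebra_simps)
  ultimately show ?thesis by (simp add: a_def)
qed


theorem proposition2:
  fixes N D :: nat and x :: "nat \<Rightarrow> real" and \<theta>p \<theta>m :: "nat \<Rightarrow> real" and \<beta> \<alpha> :: real
  assumes x01: "\<forall>i\<in>{1..N}. 0 \<le> x i \<and> x i \<le> 1"
    and D2: "D \<ge> 2"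
    and \<theta>p_nn: "\<forall>d\<in>{1..D}. 0 \<le> \<theta>p d" and \<theta>p_sum: "(\<Sum>d=1..D. \<theta>p d) = 1"
    and \<theta>m_nn: "\<forall>d\<in>{1..D}. 0 \<le> \<theta>m d" and \<theta>m_sum: "(\<Sum>d=1..D. \<theta>m d) = 1"
    and \<beta>01: "0 \<le> \<beta>" "\<beta> \<le> 1"
    and \<alpha>01: "0 < \<alpha>" "\<alpha> < 1"
  defines "\<mu>star \<equiv> (\<Sum>i=1..N. x i) / real N"
  defines "X \<equiv> (\<lambda>i (\<sigma>::nat \<Rightarrow> nat). x (\<sigma> i))"
  defines "M \<equiv> (\<lambda>\<mu> t \<sigma>. Mpm N D \<beta> \<theta>p \<theta>m (\<lambda>i. X i \<sigma>) \<mu> t)"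
  shows "(\<forall>\<sigma>\<in>sample_space N. \<forall>t\<le>N. 0 \<le> M \<mu>star t \<sigma>)
       \<and> (\<forall>\<sigma>\<in>sample_space N. M \<mu>star 0 \<sigma> = 1)
       \<and> uniform_martingale (sample_space N) N X (M \<mu>star)
       \<and> measure_pmf.prob (pmf_of_set (sample_space N))
           {\<sigma>. \<exists>t\<in>{1..N}. \<mu>star \<notin> {\<mu>\<in>{0..1}. M \<mu> t \<sigma> < 1 / \<alpha>}} \<le> \<alpha>"
proof -
  define \<Omega> where "\<Omega> = sample_space N"
  have finO: "finite \<Omega>" unfolding \<Omega>_def sample_space_def by (rule finite_permutations) simp
  have neO: "\<Omega> \<noteq> {}" unfolding \<Omega>_def sample_space_def using permutes_id by blast
  have Malt: "M \<mu> t \<sigma> = \<beta> * Mplus N D \<theta>p (\<lambda>i. x (\<sigma> i)) \<mu> t + (1 - \<beta>) * Mminus N D \<theta>m (\<lambda>i. x (\<sigma> i)) \<mu> t"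
    for \<mu> t \<sigma> unfolding M_def X_def by (rule Mpm_alt[OF \<theta>p_sum \<theta>m_sum])
  have Nmu: "real N * \<mu>star = (\<Sum>i=1..N. x i)" if "N > 0" using that by (simp add: \<mu>star_def)
  have xs01: "0 \<le> x (\<sigma> j) \<and> x (\<sigma> j) \<le> 1" if "\<sigma> \<in> \<Omega>" "j \<in> {1..N}" for \<sigma> j
  proof -
    have "\<sigma> j \<in> {1..N}" using that permutes_in_image[of \<sigma> "{1..N}" j]
      by (simp add: \<Omega>_def sample_space_def)
    then show ?thesis using x01 by blast
  qed
  have Cb: "0 \<le> Ccond N (\<lambda>i. x (\<sigma> i)) \<mu>star i \<and> Ccond N (\<lambda>i. x (\<sigma> i)) \<mu>star i \<le> 1"
    if s: "\<sigma> \<in> \<Omega>" and i: "1 \<le> i" "i \<le> N" for \<sigma> i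
  proof -
    have "(\<Sum>i=1..N. x i) = (\<Sum>j=1..N. x (\<sigma> j))"
      using s sumperm[of \<sigma> N x] by (simp add: \<Omega>_def sample_space_def)
    also have "\<dots> = (\<Sum>j=1..<i. x (\<sigma> j)) + (\<Sum>j=i..N. x (\<sigma> j))"
      using i by (intro split_sum) auto
    finally have num: "real N * \<mu>star - (\<Sum>j=1..<i. x (\<sigma> j)) = (\<Sum>j=i..N. x (\<sigma> j))"
      using Nmu i by simp
    have den: "real N - real i + 1 = real (card {i..N})" using i by simp
    have dpos: "real (card {i..N}) > 0" using i by simp
    have s0: "0 \<le> (\<Sum>j=i..N. x (\<sigma> j))" using xs01[OF s] i by (intro sum_nonneg) auto
    have s1: "(\<Sum>j=i..N. x (\<sigma> j)) \<le> (\<Sum>j=i..N. 1)" using xs01[OF s] i by (intro sum_mono) auto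
    show ?thesis unfolding Ccond_def num den using s0 s1 dpos by simp
  qed
  have nn: "\<forall>\<sigma>\<in>\<Omega>. \<forall>t\<le>N. 0 \<le> M \<mu>star t \<sigma>"
  proof (intro ballI allI impI)
    fix \<sigma> t assume s: "\<sigma> \<in> \<Omega>" and t: "t \<le> N"
    have "0 \<le> Mplus N D \<theta>p (\<lambda>i. x (\<sigma> i)) \<mu>star t"
      unfolding Mplus_def using \<theta>p_nn Cb[OF s] xs01[OF s] t
      by (intro sum_nonneg mult_nonneg_nonneg prod_nonneg fp_nn) auto
    moreover have "0 \<le> Mminus N D \<theta>m (\<lambda>i. x (\<sigma> i)) \<mu>star t"
      unfolding Mminus_def using \<theta>m_nn Cb[OF s] xs01[OF s] t
      by (intro sum_nonneg mult_nonneg_nonneg prod_nonneg fm_nn) auto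
    ultimately show "0 \<le> M \<mu>star t \<sigma>" unfolding Malt using \<beta>01 by simp
  qed
  have M0: "\<forall>\<sigma>\<in>\<Omega>. M \<mu>star 0 \<sigma> = 1" by (simp add: M_def Mpm_def)
  have mart: "uniform_martingale \<Omega> N X (M \<mu>star)"
    unfolding uniform_martingale_def
  proof (intro allI impI ballI)
    fix t \<sigma> assume tN: "t < N" and s: "\<sigma> \<in> \<Omega>"
    define A where "A = {\<sigma>'\<in>\<Omega>. \<forall>i\<in>{1..t}. X i \<sigma>' = X i \<sigma>}"
    define Ys where "Ys = (\<lambda>i. x (\<sigma> i))"
    define C where "C = Ccond N Ys \<mu>star (Suc t)"
    define K where "K = \<beta> * Kp N D \<theta>p Ys \<mu>star t - (1 - \<beta>) * Km N D \<theta>m Ys \<mu>star t"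
    have finA: "finite A" using finO by (simp add: A_def)
    have sA: "\<sigma> \<in> A" using s by (simp add: A_def)
    have cA: "real (card A) > 0" using finA sA by (simp add: card_gt_0_iff) blast
    have Mstep: "M \<mu>star (Suc t) \<sigma>' = M \<mu>star t \<sigma> + (x (\<sigma>' (Suc t)) - C) * K" if "\<sigma>' \<in> A" for \<sigma>'
    proof -
      have loc: "\<forall>j\<in>{1..t}. x (\<sigma>' j) = Ys j" using that by (simp add: A_def X_def Ys_def)
      show ?thesis unfolding Malt Mplus_Suc Mminus_Suc Mlocal[OF loc] C_def K_def Ys_def
        by (simp add: algebra_simps)
    qed
    have symmA: "real (N - t) * (\<Sum>\<sigma>'\<in>A. x (\<sigma>' (Suc t)))
         = real (card A) * ((\<Sum>i=1..N. x i) - (\<Sum>j=1..t. x (\<sigma> j)))"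
      using symm[OF tN, of \<sigma> x] s by (simp add: A_def \<Omega>_def X_def)
    have CC: "C = ((\<Sum>i=1..N. x i) - (\<Sum>j=1..t. x (\<sigma> j))) / real (N - t)"
      using Nmu tN by (simp add: C_def Ccond_def Ys_def atLeastLessThanSuc_atLeastAtMost of_nat_diff)
    have SA: "(\<Sum>\<sigma>'\<in>A. x (\<sigma>' (Suc t))) = real (card A) * C"
      unfolding CC using symmA tN by (simp add: field_simps)
    have "(\<Sum>\<sigma>'\<in>A. M \<mu>star (Suc t) \<sigma>') = (\<Sum>\<sigma>'\<in>A. M \<mu>star t \<sigma> + (x (\<sigma>' (Suc t)) - C) * K)"
      using Mstep by (rule sum.cong[OF refl])
    also have "\<dots> = real (card A) * M \<mu>star t \<sigma> + ((\<Sum>\<sigma>'\<in>A. x (\<sigma>' (Suc t))) - real (card A) * C) * K"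
      by (simp add: sum.distrib sum_distrib_right[symmetric] sum_subtractf)
    also have "\<dots> = real (card A) * M \<mu>star t \<sigma>" using SA by simp
    finally show "(\<Sum>\<sigma>'\<in>{\<sigma>' \<in> \<Omega>. \<forall>i\<in>{1..t}. X i \<sigma>' = X i \<sigma>}. M \<mu>star (Suc t) \<sigma>') /
         real (card {\<sigma>' \<in> \<Omega>. \<forall>i\<in>{1..t}. X i \<sigma>' = X i \<sigma>}) = M \<mu>star t \<sigma>"
      using cA unfolding A_def by simp
  qed
  have prob: "measure_pmf.prob (pmf_of_set \<Omega>)
           {\<sigma>. \<exists>t\<in>{1..N}. \<mu>star \<notin> {\<mu>\<in>{0..1}. M \<mu> t \<sigma> < 1 / \<alpha>}} \<le> \<alpha>"
  proof (cases "N = 0")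
    case True then show ?thesis using \<alpha>01 by simp
  next
    case False
    have mu01: "\<mu>star \<in> {0..1}"
    proof -
      have "0 \<le> (\<Sum>i=1..N. x i)" using x01 by (intro sum_nonneg) auto
      moreover have "(\<Sum>i=1..N. x i) \<le> (\<Sum>i=1..N. 1)" using x01 by (intro sum_mono) auto
      ultimately show ?thesis using False by (simp add: \<mu>star_def field_simps)
    qed
    have E: "\<Omega> \<inter> {\<sigma>. \<exists>t\<in>{1..N}. \<mu>star \<notin> {\<mu>\<in>{0..1}. M \<mu> t \<sigma> < 1 / \<alpha>}}
        = {\<sigma>\<in>\<Omega>. \<exists>t\<in>{1..N}. M \<mu>star t \<sigma> \<ge> 1 / \<alpha>}"
      using mu01 by (auto simp: not_less intro!: bexI)
    have v: "(1 / \<alpha>) * real (card {\<sigma>\<in>\<Omega>. \<exists>t\<in>{1..N}. M \<mu>star t \<sigma> \<ge> 1 / \<alpha>}) \<le> real (card \<Omega>)"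
      by (rule ville[OF finO mart nn M0]) (use \<alpha>01 in simp)
    have cO: "real (card \<Omega>) > 0" using finO neO by (simp add: card_gt_0_iff)
    show ?thesis
      unfolding measure_pmf_of_set[OF neO finO] E using v cO \<alpha>01
      by (simp add: field_simps)
  qed
  show ?thesis using nn M0 mart prob unfolding \<Omega>_def by blast
qed

end
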